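(* Let $H$ be a connected false-twin-free graph with $|V(H)|\ge 7$. Suppose $B$ is a biclique of $H$ such that either the subgraph induced by $B$ contains an induced $K_{1,3}$, or the subgraph induced by $B$ is a $C_4$. Let $q$ be the vertex of $G=KB(H)$ corresponding to $B$. Then $d_G(q)\ge 3$.
   Context: All graphs are finite, simple, undirected and connected. A biclique of a graph $H$ is a maximal (with respect to vertex-set inclusion) set of vertices inducing a complete bipartite subgraph $K_{r,s}$ with $r,s\ge 1$. The biclique graph $KB(H)$ is the intersection graph of the family of all bicliques of $H$: its vertices are the bicliques of $H$, and two bicliques are adjacent iff they share at least one vertex. Two distinct vertices $u,v$ are false-twins if $N(u)=N(v)$, where $N(\cdot)$ is the open neighborhood; a graph is false-twin-free if it has no pair of false-twins. *)

theory Defs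
  imports Main
begin

definition simple_graph :: "'a set \<Rightarrow> ('a \<Rightarrow> 'a \<Rightarrow> bool) \<Rightarrow> bool" where
  "simple_graph V E \<longleftrightarrow> finite V \<and> (\<forall>x y. E x y \<longrightarrow> x \<in> V \<and> y \<in> V)
     \<and> (\<forall>x y. E x y \<longrightarrow> E y x) \<and> (\<forall>x. \<not> E x x)"

definition connected_graph :: "'a set \<Rightarrow> ('a \<Rightarrow> 'a \<Rightarrow> bool) \<Rightarrow> bool" where
  "connected_graph V E \<longleftrightarrow> V \<noteq> {} \<and> (\<forall>x\<in>V. \<forall>y\<in>V. E\<^sup>*\<^sup>* x y)"

definition nbhd :: "('a \<Rightarrow> 'a \<Rightarrow> bool) \<Rightarrow> 'a \<Rightarrow> 'a set" where
  "nbhd E v = {u. E v u}"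

definition false_twin_free :: "'a set \<Rightarrow> ('a \<Rightarrow> 'a \<Rightarrow> bool) \<Rightarrow> bool" where
  "false_twin_free V E \<longleftrightarrow> (\<forall>u\<in>V. \<forall>v\<in>V. u \<noteq> v \<longrightarrow> nbhd E u \<noteq> nbhd E v)"

definition induces_complete_bipartite :: "('a \<Rightarrow> 'a \<Rightarrow> bool) \<Rightarrow> 'a set \<Rightarrow> bool" where
  "induces_complete_bipartite E S \<longleftrightarrow> (\<exists>X Y. X \<noteq> {} \<and> Y \<noteq> {} \<and> X \<inter> Y = {} \<and> X \<union> Y = S
     \<and> (\<forall>x\<in>X. \<forall>x'\<in>X. \<not> E x x') \<and> (\<forall>y\<in>Y. \<forall>y'\<in>Y. \<not> E y y')
     \<and> (\<forall>x\<in>X. \<forall>y\<in>Y. E x y))"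

definition is_biclique :: "'a set \<Rightarrow> ('a \<Rightarrow> 'a \<Rightarrow> bool) \<Rightarrow> 'a set \<Rightarrow> bool" where
  "is_biclique V E B \<longleftrightarrow> B \<subseteq> V \<and> induces_complete_bipartite E B
     \<and> (\<forall>B'. B \<subseteq> B' \<and> B' \<subseteq> V \<and> induces_complete_bipartite E B' \<longrightarrow> B' = B)"

definition bicliques :: "'a set \<Rightarrow> ('a \<Rightarrow> 'a \<Rightarrow> bool) \<Rightarrow> 'a set set" where
  "bicliques V E = {B. is_biclique V E B}"

definition KB_adj :: "'a set \<Rightarrow> ('a \<Rightarrow> 'a \<Rightarrow> bool) \<Rightarrow> 'a set \<Rightarrow> 'a set \<Rightarrow> bool" where
  "KB_adj V E B1 B2 \<longleftrightarrow> B1 \<in> bicliques V E \<and> B2 \<in> bicliques V E \<and> B1 \<noteq> B2 \<and> B1 \<inter> B2 \<noteq> {}"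

definition degree :: "('b \<Rightarrow> 'b \<Rightarrow> bool) \<Rightarrow> 'b \<Rightarrow> nat" where
  "degree G v = card {u. G v u}"

definition has_induced_claw :: "('a \<Rightarrow> 'a \<Rightarrow> bool) \<Rightarrow> 'a set \<Rightarrow> bool" where
  "has_induced_claw E S \<longleftrightarrow> (\<exists>v a b c. v \<in> S \<and> a \<in> S \<and> b \<in> S \<and> c \<in> S
     \<and> E v a \<and> E v b \<and> E v c \<and> a \<noteq> b \<and> a \<noteq> c \<and> b \<noteq> c
     \<and> \<not> E a b \<and> \<not> E a c \<and> \<not> E b c)"

definition induces_C4 :: "('a \<Rightarrow> 'a \<Rightarrow> bool) \<Rightarrow> 'a set \<Rightarrow> bool" where
  "induces_C4 E S \<longleftrightarrow> (\<exists>a b c d. S = {a, b, c, d} \<and> distinct [a, b, c, d]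
     \<and> E a b \<and> E b c \<and> E c d \<and> E d a \<and> \<not> E a c \<and> \<not> E b d)"

end

theory Submission
  imports Defs
begin

abbreviation CB where "CB E S \<equiv> induces_complete_bipartite E S"

lemma tri_rule:
  assumes sg: "simple_graph V E" and cb: "CB E D" and p: "p \<in> D" and q: "q \<in> D" and r: "r \<in> D"
  shows "E p r = (E p q = (\<not> E q r))"
proof -
  from cb obtain P Q where PQ: "P \<inter> Q = {}" "P \<union> Q = D"
     "\<forall>x\<in>P. \<forall>x'\<in>P. \<not> E x x'" "\<forall>y\<in>Q. \<forall>y'\<in>Q. \<not> E y y'" "\<forall>x\<in>P. \<forall>y\<in>Q. E x y"
    unfolding induces_complete_bipartite_def by blast
  have sym: "\<And>x y. E x y \<Longrightarrow> E y x" using sg unfolding simple_graph_def by blast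
  have key: "E s t = ((s \<in> P) \<noteq> (t \<in> P))" if "s \<in> D" "t \<in> D" for s t
  proof (cases "s \<in> P")
    case True
    show ?thesis
    proof (cases "t \<in> P")
      case True then show ?thesis using \<open>s \<in> P\<close> PQ(3) by auto
    next
      case False then have "t \<in> Q" using that PQ(2) by auto
      then show ?thesis using \<open>s \<in> P\<close> PQ(5) False by auto
    qed
  next
    case False
    then have sQ: "s \<in> Q" using that PQ(2) by auto
    show ?thesis
    proof (cases "t \<in> P")
      case True then show ?thesis using sQ PQ(5) sym False by auto
    next
      case F2: False then have "t \<in> Q" using that PQ(2) by auto
      then show ?thesis using sQ PQ(4) False F2 by auto
    qed
  qed
  show ?thesis using key[OF p q] key[OF q r] key[OF p r] by (cases "p \<in> P"; cases "q \<in> P"; cases "r \<in> P") simp_all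
qed

lemma star_cb:
  assumes sg: "simple_graph V E" and "c \<notin> L" "L \<noteq> {}" "\<forall>l\<in>L. E c l" "\<forall>l\<in>L. \<forall>l'\<in>L. \<not> E l l'"
  shows "CB E (insert c L)"
  unfolding induces_complete_bipartite_def
  apply (rule exI[of _ "{c}"], rule exI[of _ L])
  using assms unfolding simple_graph_def by auto

lemma ext_biclique:
  assumes "finite V" "S \<subseteq> V" "CB E S"
  shows "\<exists>D. is_biclique V E D \<and> S \<subseteq> D"
proof -
  let ?F = "{T. S \<subseteq> T \<and> T \<subseteq> V \<and> CB E T}"
  have "?F \<subseteq> Pow V" by auto
  then have fin: "finite ?F" using assms(1) by (meson finite_Pow_iff finite_subset)
  have SF: "S \<in> ?F" using assms by auto
  obtain m where m: "m \<in> ?F" "\<forall>b\<in>?F. m \<le> b \<longrightarrow> m = b"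
    using finite_has_maximal2[OF fin SF] by blast
  have "is_biclique V E m" unfolding is_biclique_def
  proof (intro conjI allI impI)
    show "m \<subseteq> V" "CB E m" using m(1) by auto
    fix B' assume "m \<subseteq> B' \<and> B' \<subseteq> V \<and> CB E B'"
    then have "B' \<in> ?F" "m \<le> B'" using m(1) by auto
    then show "B' = m" using m(2) by blast
  qed
  then show ?thesis using m by auto
qed

locale bs =
  fixes V :: "'a set" and E and B X Y D1 D2 :: "'a set"
  assumes sg: "simple_graph V E"
    and tf: "false_twin_free V E"
    and BV: "B \<subseteq> V"
    and XYd: "X \<inter> Y = {}" and XYu: "X \<union> Y = B" and Xne: "X \<noteq> {}" and Yne: "Y \<noteq> {}"
    and Xind: "\<forall>x\<in>X. \<forall>x'\<in>X. \<not> E x x'" and Yind: "\<forall>y\<in>Y. \<forall>y'\<in>Y. \<not> E y y'"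
    and cross: "\<forall>x\<in>X. \<forall>y\<in>Y. E x y"
    and Bmax: "\<forall>B'. B \<subseteq> B' \<and> B' \<subseteq> V \<and> CB E B' \<longrightarrow> B' = B"
    and cov: "\<forall>S. S \<subseteq> V \<longrightarrow> CB E S \<longrightarrow> S \<inter> B \<noteq> {} \<longrightarrow> \<not> S \<subseteq> B \<longrightarrow>
                 (\<exists>D. (D = D1 \<or> D = D2) \<and> CB E D \<and> S \<subseteq> D)"
begin

lemma sym: "E x y \<Longrightarrow> E y x" using sg unfolding simple_graph_def by blast
lemma Esym: "E x y = E y x" by (rule iffI) (erule sym)+
lemma irr: "\<not> E x x" using sg unfolding simple_graph_def by blast
lemma inV1: "E x y \<Longrightarrow> x \<in> V" using sg unfolding simple_graph_def by blast
lemma inV2: "E x y \<Longrightarrow> y \<in> V" using sg unfolding simple_graph_def by blast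

lemma tri: "CB E D \<Longrightarrow> p \<in> D \<Longrightarrow> q \<in> D \<Longrightarrow> r \<in> D \<Longrightarrow> E p r = (E p q = (\<not> E q r))"
  using tri_rule[OF sg] by blast

lemma cov2:
  assumes "E u w" "u \<in> B" "w \<notin> B"
  shows "\<exists>D. (D = D1 \<or> D = D2) \<and> CB E D \<and> u \<in> D \<and> w \<in> D"
proof -
  have "CB E (insert u {w})" using assms by (intro star_cb[OF sg]) (auto simp: irr)
  moreover have "insert u {w} \<subseteq> V" using assms inV1 inV2 by blast
  moreover have "insert u {w} \<inter> B \<noteq> {}" "\<not> insert u {w} \<subseteq> B" using assms by auto
  ultimately obtain D where "(D = D1 \<or> D = D2) \<and> CB E D \<and> insert u {w} \<subseteq> D"
    using cov[rule_format, of "insert u {w}"] by presburger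
  then show ?thesis by blast
qed

lemma cov3:
  assumes "E c p" "E c q" "\<not> E p q" "p \<noteq> q" "c \<in> B \<or> p \<in> B \<or> q \<in> B" "c \<notin> B \<or> p \<notin> B \<or> q \<notin> B"
  shows "\<exists>D. (D = D1 \<or> D = D2) \<and> CB E D \<and> c \<in> D \<and> p \<in> D \<and> q \<in> D"
proof -
  have "c \<noteq> p" "c \<noteq> q" using assms irr by auto
  have "\<not> E q p" using assms(3) Esym by metis
  then have "CB E (insert c {p, q})" using assms \<open>c \<noteq> p\<close> \<open>c \<noteq> q\<close> by (intro star_cb[OF sg]) (auto simp: irr)
  moreover have "insert c {p,q} \<subseteq> V" using assms inV1 inV2 by blast
  moreover have "insert c {p,q} \<inter> B \<noteq> {}" "\<not> insert c {p,q} \<subseteq> B" using assms by auto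
  ultimately obtain D where "(D = D1 \<or> D = D2) \<and> CB E D \<and> insert c {p,q} \<subseteq> D"
    using cov[rule_format, of "insert c {p,q}"] by presburger
  then show ?thesis by blast
qed

lemma cov_star:
  assumes "c \<notin> L" "L \<noteq> {}" "\<forall>l\<in>L. E c l" "\<forall>l\<in>L. \<forall>l'\<in>L. \<not> E l l'"
    "insert c L \<inter> B \<noteq> {}" "\<not> insert c L \<subseteq> B"
  shows "\<exists>D. (D = D1 \<or> D = D2) \<and> CB E D \<and> insert c L \<subseteq> D"
proof -
  have "CB E (insert c L)" using assms by (intro star_cb[OF sg]) auto
  moreover have "insert c L \<subseteq> V" using assms inV1 inV2 by blast
  ultimately show ?thesis using cov[rule_format, of "insert c L"] assms by presburger
qed

lemma YB: "y \<in> Y \<Longrightarrow> y \<in> B" using XYu by blast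
lemma XB: "x \<in> X \<Longrightarrow> x \<in> B" using XYu by blast

lemma crossY: "x \<in> X \<Longrightarrow> y \<in> Y \<Longrightarrow> E y x" using cross Esym by metis

lemma sep:
  assumes "y1 \<in> Y" "y2 \<in> Y" "y1 \<noteq> y2"
  shows "\<exists>r. r \<in> V \<and> r \<notin> B \<and> E r y1 \<and> \<not> E r y2 \<or> r \<in> V \<and> r \<notin> B \<and> E r y2 \<and> \<not> E r y1"
proof -
  have "y1 \<in> V" "y2 \<in> V" using assms BV XYu by auto
  then have "nbhd E y1 \<noteq> nbhd E y2" using tf assms unfolding false_twin_free_def by blast
  then obtain r where r: "E y1 r \<noteq> E y2 r" unfolding nbhd_def by blast
  then have "r \<in> V" using inV2 by blast
  moreover have "r \<notin> B"
  proof
    assume "r \<in> B"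
    then have "r \<in> X \<or> r \<in> Y" using XYu by blast
    then show False
    proof
      assume "r \<in> X" then have "E y1 r" "E y2 r" using crossY assms by auto
      then show False using r by blast
    next
      assume "r \<in> Y" then have "\<not> E y1 r" "\<not> E y2 r" using Yind assms by auto
      then show False using r by blast
    qed
  qed
  moreover have "E r y1 \<noteq> E r y2" using r Esym by metis
  ultimately show ?thesis by blast
qed

lemma sepD:
  assumes "y1 \<in> Y" "y2 \<in> Y" "y1 \<noteq> y2"
  shows "\<exists>D. (D = D1 \<or> D = D2) \<and> (y1 \<in> D) \<noteq> (y2 \<in> D)"
proof -
  obtain r where r: "r \<in> V" "r \<notin> B" "E r y1 \<and> \<not> E r y2 \<or> E r y2 \<and> \<not> E r y1"
    using sep[OF assms] by blast
  have yB: "y1 \<in> B" "y2 \<in> B" using assms XYu by auto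
  have n12: "\<not> E y1 y2" using Yind assms by blast
  show ?thesis
  proof (cases "E r y1")
    case True
    have "E y1 r" using True Esym by metis
    then obtain D where D: "D = D1 \<or> D = D2" "CB E D" "y1 \<in> D" "r \<in> D" using cov2[of y1 r] r yB by blast
    have "y2 \<notin> D" using tri[OF D(2) D(4) D(3)] True r n12 by blast
    then show ?thesis using D by blast
  next
    case False
    then have T: "E r y2" using r by blast
    have "E y2 r" using T Esym by metis
    then obtain D where D: "D = D1 \<or> D = D2" "CB E D" "y2 \<in> D" "r \<in> D" using cov2[of y2 r] r yB by blast
    have "\<not> E y2 y1" using n12 Esym by metis
    then have "y1 \<notin> D" using tri[OF D(2) D(4) D(3)] T False by blast
    then show ?thesis using D by blast
  qed
qed


lemma traceY:
  assumes "CB E D" "w \<in> D" "y \<in> D" "y \<in> Y" "y' \<in> D" "y' \<in> Y"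
  shows "E w y' = E w y"
proof -
  have "\<not> E y y'" using Yind assms by blast
  then show ?thesis using tri[OF assms(1) assms(2) assms(3) assms(5)] by blast
qed

lemma K0:
  assumes "w \<notin> B" "y \<in> Y" "E w y"
  shows "\<exists>D. (D = D1 \<or> D = D2) \<and> CB E D \<and> w \<in> D \<and> (\<forall>y'\<in>Y. (y' \<in> D) = E w y')"
proof -
  let ?L = "{y'\<in>Y. E w y'}"
  have "w \<notin> ?L" using assms XYu by blast
  moreover have "?L \<noteq> {}" using assms by blast
  moreover have "\<forall>l\<in>?L. E w l" by blast
  moreover have "\<forall>l\<in>?L. \<forall>l'\<in>?L. \<not> E l l'" using Yind by blast
  moreover have "insert w ?L \<inter> B \<noteq> {}" using assms XYu by blast
  moreover have "\<not> insert w ?L \<subseteq> B" using assms by blast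
  ultimately obtain D where D: "D = D1 \<or> D = D2" "CB E D" "insert w ?L \<subseteq> D"
    using cov_star[of w ?L] by blast
  have "(y' \<in> D) = E w y'" if "y' \<in> Y" for y'
  proof
    assume "y' \<in> D"
    then show "E w y'" using traceY[OF D(2), of w y y'] D(3) assms that by blast
  next
    assume "E w y'" then show "y' \<in> D" using D(3) that by blast
  qed
  then show ?thesis using D by blast
qed

lemma closure_all:
  assumes conn: "\<forall>x\<in>V. \<forall>y\<in>V. E\<^sup>*\<^sup>* x y" and x0: "x0 \<in> U" "x0 \<in> V"
    and cl: "\<And>s t. s \<in> U \<Longrightarrow> E s t \<Longrightarrow> t \<in> U"
  shows "V \<subseteq> U"
proof
  fix t assume "t \<in> V"
  then have "E\<^sup>*\<^sup>* x0 t" using conn x0 by blast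
  then show "t \<in> U"
  proof (induction rule: rtranclp_induct)
    case base then show ?case using x0 by blast
  next
    case (step y z) then show ?case using cl by blast
  qed
qed

lemma finV: "finite V" using sg unfolding simple_graph_def by blast

lemma card2: "card {p, q} \<le> 2" by (cases "p = q") auto

end

locale claw = bs +
  fixes v a b c
  assumes v: "v \<in> X" and abc: "a \<in> Y" "b \<in> Y" "c \<in> Y" "a \<noteq> b" "a \<noteq> c" "b \<noteq> c"
begin

lemma pat: "(a \<in> D1) \<noteq> (b \<in> D1) \<or> (a \<in> D2) \<noteq> (b \<in> D2)"
           "(a \<in> D1) \<noteq> (c \<in> D1) \<or> (a \<in> D2) \<noteq> (c \<in> D2)"
           "(b \<in> D1) \<noteq> (c \<in> D1) \<or> (b \<in> D2) \<noteq> (c \<in> D2)"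
  using sepD[of a b] sepD[of a c] sepD[of b c] abc by blast+

lemma mixed: "\<exists>y\<in>Y. (y \<in> D1) \<noteq> (y \<in> D2)"
  using pat abc by blast

lemma vB: "v \<in> B" using v XYu by blast

lemma K2:
  assumes w: "w \<notin> B" and x: "x \<in> X" and wx: "E w x"
  shows False
proof (cases "\<exists>y\<in>Y. E w y")
  case False
  let ?L = "insert w Y"
  have xw: "E x w" using wx Esym by metis
  have "x \<notin> ?L" using x w XYd XYu by blast
  moreover have "?L \<noteq> {}" by blast
  moreover have "\<forall>l\<in>?L. E x l" using xw cross x by blast
  moreover have "\<forall>l\<in>?L. \<forall>l'\<in>?L. \<not> E l l'"
  proof (intro ballI)
    fix l l' assume "l \<in> ?L" "l' \<in> ?L"
    then show "\<not> E l l'" using False Yind irr Esym by (metis insert_iff)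
  qed
  moreover have "insert x ?L \<inter> B \<noteq> {}" using x XYu by blast
  moreover have "\<not> insert x ?L \<subseteq> B" using w by blast
  ultimately obtain D where D: "D = D1 \<or> D = D2" "insert x ?L \<subseteq> D"
    using cov_star[of x ?L] by blast
  then have "a \<in> D" "b \<in> D" "c \<in> D" using abc by auto
  then show False using D(1) pat by blast
next
  case True
  then obtain y0 where y0: "y0 \<in> Y" "E w y0" by blast
  obtain Dw where Dw: "Dw = D1 \<or> Dw = D2" "CB E Dw" "w \<in> Dw" "\<forall>y'\<in>Y. (y' \<in> Dw) = E w y'"
    using K0[OF w y0] by blast
  show False
  proof (cases "E w a \<and> E w b \<and> E w c")
    case True
    then have "a \<in> Dw" "b \<in> Dw" "c \<in> Dw" using Dw(4) abc by auto
    then show False using Dw(1) pat by blast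
  next
    case False
    then obtain y1 where y1: "y1 \<in> Y" "\<not> E w y1" using abc by blast
    have xw: "E x w" using wx Esym by metis
    have wy1: "w \<noteq> y1" using w y1 XYu by blast
    obtain D' where D': "D' = D1 \<or> D' = D2" "CB E D'" "x \<in> D'" "w \<in> D'" "y1 \<in> D'"
      using cov3[of x w y1] xw cross x y1 wy1 w XYu by blast
    have neq: "D' \<noteq> Dw" using D'(5) Dw(4) y1 by blast
    have memD': "(y \<in> D') = (\<not> E w y)" if yY: "y \<in> Y" for y
    proof (cases "E w y")
      case True
      then show ?thesis using traceY[OF D'(2) D'(4) D'(5) y1(1) _ yY] y1 by blast
    next
      case False
      have wy: "w \<noteq> y" using w yY XYu by blast
      obtain D'' where D'': "D'' = D1 \<or> D'' = D2" "CB E D''" "x \<in> D''" "w \<in> D''" "y \<in> D''"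
        using cov3[of x w y] xw cross x yY wy w XYu False by blast
      have "D'' \<noteq> Dw" using D''(5) Dw(4) yY False by blast
      then have "D'' = D'" using D''(1) D'(1) Dw(1) neq by blast
      then show ?thesis using D''(5) False by blast
    qed
    have "(y \<in> Dw) = (y \<notin> D')" if "y \<in> Y" for y using memD' Dw(4) that by blast
    then have "(a \<in> Dw) = (a \<notin> D')" "(b \<in> Dw) = (b \<notin> D')" "(c \<in> Dw) = (c \<notin> D')"
      using abc by auto
    then show False using pat Dw(1) D'(1) neq by blast
  qed
qed

lemma vw: "w \<notin> B \<Longrightarrow> \<not> E v w"
proof
  assume "w \<notin> B" "E v w"
  then have "E w v" by (simp add: Esym)
  then show False using K2[of w v] v \<open>w \<notin> B\<close> by blast
qed

lemma K3core:
  assumes w: "w \<notin> B" and z: "z \<notin> B" and wz: "E w z"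
    and cov12: "\<forall>y\<in>Y. y \<in> D1 \<or> y \<in> D2 \<longrightarrow> E w y"
  shows False
proof -
  obtain y1 where y1: "y1 \<in> Y" "(y1 \<in> D1) \<noteq> (y1 \<in> D2)" using mixed by blast
  have wy1: "E w y1" using cov12 y1 by blast
  have y1w: "E y1 w" using wy1 Esym by metis
  have y1v: "E y1 v" using crossY v y1 by blast
  have nvw: "\<not> E v w" "\<not> E v z" using vw w z by auto
  have "v \<noteq> w" "v \<noteq> z" using vB w z by auto
  obtain DA where DA: "DA = D1 \<or> DA = D2" "CB E DA" "y1 \<in> DA" "v \<in> DA" "w \<in> DA"
    using cov3[of y1 v w] y1v y1w nvw \<open>v \<noteq> w\<close> vB w by blast
  show False
  proof (cases "E z y1")
    case False
    have "y1 \<noteq> z" using y1 z XYu by blast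
    have "\<not> E y1 z" using False Esym by metis
    then obtain DB where DB: "DB = D1 \<or> DB = D2" "CB E DB" "w \<in> DB" "y1 \<in> DB" "z \<in> DB"
      using cov3[of w y1 z] wy1 wz \<open>y1 \<noteq> z\<close> w YB[OF y1(1)] by blast
    have "DA \<noteq> DB"
    proof
      assume "DA = DB"
      then have "z \<in> DA" using DB by blast
      then have "E v z = (E v w = (\<not> E w z))" using tri[OF DA(2) DA(4) DA(5)] by blast
      then show False using nvw wz by blast
    qed
    then show False using DA(1,3) DB(1,4) y1(2) by (cases "y1 \<in> D1") auto
  next
    case True
    have y1z: "E y1 z" using True Esym by metis
    obtain DC where DC: "DC = D1 \<or> DC = D2" "CB E DC" "y1 \<in> DC" "v \<in> DC" "z \<in> DC"
      using cov3[of y1 v z] y1v y1z nvw \<open>v \<noteq> z\<close> vB z by blast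
    have "DA = DC" using DA(1,3) DC(1,3) y1(2) by (cases "y1 \<in> D1") auto
    then have "z \<in> DA" using DC by blast
    then have "E w z = (E w y1 = (\<not> E y1 z))" using tri[OF DA(2) DA(5) DA(3)] by blast
    then show False using wz wy1 y1z by blast
  qed
qed

lemma K3a:
  assumes w: "w \<notin> B" and z: "z \<notin> B" and wz: "E w z" and y: "y \<in> Y" "E w y" "\<not> E z y"
  shows False
proof -
  have yw: "E y w" using y Esym by metis
  have yv: "E y v" using crossY v y by blast
  have nvw: "\<not> E v w" "\<not> E v z" using vw w z by auto
  have "v \<noteq> w" using vB w by auto
  obtain DA where DA: "DA = D1 \<or> DA = D2" "CB E DA" "y \<in> DA" "v \<in> DA" "w \<in> DA"
    using cov3[of y v w] yv yw nvw \<open>v \<noteq> w\<close> vB w by blast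
  have "y \<noteq> z" using y z XYu by blast
  have "\<not> E y z" using y Esym by metis
  then obtain DB where DB: "DB = D1 \<or> DB = D2" "CB E DB" "w \<in> DB" "y \<in> DB" "z \<in> DB"
    using cov3[of w y z] y wz \<open>y \<noteq> z\<close> w YB[OF y(1)] by blast
  have "DA \<noteq> DB"
  proof
    assume "DA = DB"
    then have "z \<in> DA" using DB by blast
    then have "E v z = (E v w = (\<not> E w z))" using tri[OF DA(2) DA(4) DA(5)] by blast
    then show False using nvw wz by blast
  qed
  have "\<forall>y'\<in>Y. y' \<in> D1 \<or> y' \<in> D2 \<longrightarrow> E w y'"
  proof (intro ballI impI)
    fix y' assume y': "y' \<in> Y" "y' \<in> D1 \<or> y' \<in> D2"
    then have "y' \<in> DA \<or> y' \<in> DB" using DA(1) DB(1) \<open>DA \<noteq> DB\<close> by blast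
    then show "E w y'"
    proof
      assume "y' \<in> DA" then show ?thesis using traceY[OF DA(2) DA(5) DA(3) y(1) _ y'(1)] y by blast
    next
      assume "y' \<in> DB" then show ?thesis using traceY[OF DB(2) DB(3) DB(4) y(1) _ y'(1)] y by blast
    qed
  qed
  then show False using K3core[OF w z wz] by blast
qed

lemma K3:
  assumes w: "w \<notin> B" and z: "z \<notin> B" and wz: "E w z" and y: "y \<in> Y" "E w y"
  shows False
proof -
  have zw: "E z w" using wz Esym by metis
  show False
  proof (cases "\<exists>y'\<in>Y. E w y' \<and> \<not> E z y'")
    case True then show False using K3a[OF w z wz] by blast
  next
    case F1: False
    show False
    proof (cases "\<exists>y'\<in>Y. E z y' \<and> \<not> E w y'")
      case True then show False using K3a[OF z w zw] by blast
    next
      case False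
      then have same: "\<forall>y'\<in>Y. E w y' = E z y'" using F1 by blast
      have yw: "E y w" using y Esym by metis
      have yv: "E y v" using crossY v y by blast
      have nvw: "\<not> E v w" "\<not> E v z" using vw w z by auto
      have "v \<noteq> w" "v \<noteq> z" using vB w z by auto
      have yz: "E y z" using same y Esym by metis
      obtain DA where DA: "DA = D1 \<or> DA = D2" "CB E DA" "y \<in> DA" "v \<in> DA" "w \<in> DA"
        using cov3[of y v w] yv yw nvw \<open>v \<noteq> w\<close> vB w by blast
      obtain DC where DC: "DC = D1 \<or> DC = D2" "CB E DC" "y \<in> DC" "v \<in> DC" "z \<in> DC"
        using cov3[of y v z] yv yz nvw \<open>v \<noteq> z\<close> vB z by blast
      have "DA \<noteq> DC"
      proof
        assume "DA = DC"
        then have "z \<in> DA" using DC by blast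
        then have "E w z = (E w y = (\<not> E y z))" using tri[OF DA(2) DA(5) DA(3)] by blast
        then show False using wz y yz by blast
      qed
      have "\<forall>y'\<in>Y. y' \<in> D1 \<or> y' \<in> D2 \<longrightarrow> E w y'"
      proof (intro ballI impI)
        fix y' assume y': "y' \<in> Y" "y' \<in> D1 \<or> y' \<in> D2"
        then have "y' \<in> DA \<or> y' \<in> DC" using DA(1) DC(1) \<open>DA \<noteq> DC\<close> by blast
        then show "E w y'"
        proof
          assume "y' \<in> DA" then show ?thesis using traceY[OF DA(2) DA(5) DA(3) y(1) _ y'(1)] y by blast
        next
          assume "y' \<in> DC"
          then have "E z y'" using traceY[OF DC(2) DC(5) DC(3) y(1) _ y'(1)] yz Esym by metis
          then show ?thesis using same y'(1) by blast
        qed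
      qed
      then show False using K3core[OF w z wz] by blast
    qed
  qed
qed


lemma star_final:
  assumes w1: "w1 \<notin> B" and w2: "w2 \<notin> B"
    and y11: "y11 \<in> Y" "E w1 y11" "E w2 y11"
    and y10: "y10 \<in> Y" "E w1 y10" "\<not> E w2 y10"
    and y01: "y01 \<in> Y" "E w2 y01" "\<not> E w1 y01"
  shows False
proof -
  have n12: "\<not> E w1 w2" using K3[OF w1 w2 _ y11(1,2)] by blast
  have "w1 \<noteq> w2" using y10 by blast
  have "E y11 w1" "E y11 w2" using y11 Esym by metis+
  then obtain D where D: "D = D1 \<or> D = D2" "CB E D" "y11 \<in> D" "w1 \<in> D" "w2 \<in> D"
    using cov3[of y11 w1 w2] n12 \<open>w1 \<noteq> w2\<close> YB[OF y11(1)] w1 by blast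
  obtain Da where Da: "Da = D1 \<or> Da = D2" "\<forall>y'\<in>Y. (y' \<in> Da) = E w1 y'"
    using K0[OF w1 y11(1,2)] by blast
  obtain Db where Db: "Db = D1 \<or> Db = D2" "\<forall>y'\<in>Y. (y' \<in> Db) = E w2 y'"
    using K0[OF w2 y11(1,3)] by blast
  have "Da \<noteq> Db" using Da(2) Db(2) y10 by blast
  then have "D = Da \<or> D = Db" using D(1) Da(1) Db(1) by blast
  then show False
  proof
    assume "D = Da"
    then have "y10 \<in> D" using Da(2) y10 by blast
    then have "E w2 y10 = E w2 y11" using traceY[OF D(2) D(5) D(3) y11(1) _ y10(1)] by blast
    then show False using y10 y11 by blast
  next
    assume "D = Db"
    then have "y01 \<in> D" using Db(2) y01 by blast
    then have "E w1 y01 = E w1 y11" using traceY[OF D(2) D(4) D(3) y11(1) _ y01(1)] by blast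
    then show False using y01 y11 by blast
  qed
qed

lemma claw_false:
  assumes conn: "\<forall>x\<in>V. \<forall>y\<in>V. E\<^sup>*\<^sup>* x y" and c7: "7 \<le> card V"
  shows False
proof -
  define W where "W = V - B"
  have WB: "w \<in> W \<Longrightarrow> w \<notin> B" for w using W_def by blast
  let ?U = "B \<union> {w. w \<in> V \<and> w \<notin> B \<and> (\<exists>y\<in>Y. E w y)}"
  have cl: "t \<in> ?U" if s: "s \<in> ?U" and st: "E s t" for s t
  proof (cases "t \<in> B")
    case True then show ?thesis by blast
  next
    case tB: False
    have tV: "t \<in> V" using st inV2 by blast
    have ts: "E t s" using st Esym by metis
    show ?thesis
    proof (cases "s \<in> B")
      case True
      then have "s \<in> X \<or> s \<in> Y" using XYu by blast
      then show ?thesis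
      proof
        assume "s \<in> X" then show ?thesis using K2[OF tB _ ts] by blast
      next
        assume "s \<in> Y" then show ?thesis using tB tV ts by blast
      qed
    next
      case False
      then obtain y where "y \<in> Y" "E s y" using s by blast
      then show ?thesis using K3[OF False tB st] by blast
    qed
  qed
  have VU: "V \<subseteq> ?U" using closure_all[OF conn, of v ?U] cl vB BV by blast
  have W1: "\<exists>y\<in>Y. E w y" if "w \<in> W" for w using VU that W_def by blast
  have nbX: "nbhd E x = Y" if x: "x \<in> X" for x
  proof
    show "nbhd E x \<subseteq> Y"
    proof
      fix u assume "u \<in> nbhd E x"
      then have xu: "E x u" unfolding nbhd_def by blast
      have ux: "E u x" using xu Esym by metis
      have "u \<in> B" using K2[OF _ x ux] by blast
      moreover have "u \<notin> X" using Xind x xu by blast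
      ultimately show "u \<in> Y" using XYu by blast
    qed
  next
    show "Y \<subseteq> nbhd E x" using cross x unfolding nbhd_def by blast
  qed
  have Xv: "X = {v}"
  proof -
    have "x = v" if x: "x \<in> X" for x
    proof (rule ccontr)
      assume "x \<noteq> v"
      moreover have "x \<in> V" "v \<in> V" using x v XYu BV by blast+
      ultimately have "nbhd E x \<noteq> nbhd E v" using tf unfolding false_twin_free_def by blast
      then show False using nbX[OF x] nbX[OF v] by simp
    qed
    then show ?thesis using v by blast
  qed
  have nbW: "nbhd E w = {y\<in>Y. E w y}" if w: "w \<in> W" for w
  proof
    show "nbhd E w \<subseteq> {y\<in>Y. E w y}"
    proof
      fix u assume "u \<in> nbhd E w"
      then have wu: "E w u" unfolding nbhd_def by blast
      obtain y where y: "y \<in> Y" "E w y" using W1[OF w] by blast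
      have "u \<in> B" using K3[OF WB[OF w] _ wu y] by blast
      moreover have "u \<notin> X" using K2[OF WB[OF w] _ wu] by blast
      ultimately show "u \<in> {y\<in>Y. E w y}" using XYu wu by blast
    qed
  next
    show "{y\<in>Y. E w y} \<subseteq> nbhd E w" unfolding nbhd_def by blast
  qed
  have finW: "finite W" using finV W_def by blast
  have finY: "finite Y" using finV BV XYu by (meson finite_subset le_sup_iff)
  have injW: "inj_on (nbhd E) W"
  proof (rule inj_onI)
    fix w w' assume "w \<in> W" "w' \<in> W" "nbhd E w = nbhd E w'"
    then show "w = w'" using tf W_def unfolding false_twin_free_def by blast
  qed
  have imW: "nbhd E ` W \<subseteq> {D1 \<inter> Y, D2 \<inter> Y}"
  proof
    fix S assume "S \<in> nbhd E ` W"
    then obtain w where w: "w \<in> W" "S = nbhd E w" by blast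
    obtain y where y: "y \<in> Y" "E w y" using W1[OF w(1)] by blast
    obtain D where D: "D = D1 \<or> D = D2" "\<forall>y'\<in>Y. (y' \<in> D) = E w y'"
      using K0[OF WB[OF w(1)] y] by blast
    have "S = D \<inter> Y" using w nbW[OF w(1)] D(2) by blast
    then show "S \<in> {D1 \<inter> Y, D2 \<inter> Y}" using D(1) by blast
  qed
  have cW: "card W \<le> 2"
    using card_inj_on_le[OF injW imW] card2[of "D1 \<inter> Y" "D2 \<inter> Y"] by simp
  let ?g = "\<lambda>y. nbhd E y \<inter> W"
  have nbY: "nbhd E y = X \<union> ?g y" if y: "y \<in> Y" for y
  proof
    show "nbhd E y \<subseteq> X \<union> ?g y"
    proof
      fix u assume u: "u \<in> nbhd E y"
      then have yu: "E y u" unfolding nbhd_def by blast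
      have "u \<in> V" using yu inV2 by blast
      moreover have "u \<notin> Y" using Yind y yu by blast
      ultimately show "u \<in> X \<union> ?g y" using u XYu W_def by blast
    qed
  next
    show "X \<union> ?g y \<subseteq> nbhd E y" using crossY y unfolding nbhd_def by blast
  qed
  have injY: "inj_on ?g Y"
  proof (rule inj_onI)
    fix y y' assume yy: "y \<in> Y" "y' \<in> Y" "?g y = ?g y'"
    then have "nbhd E y = nbhd E y'" using nbY by metis
    moreover have "y \<in> V" "y' \<in> V" using yy BV XYu by blast+
    ultimately show "y = y'" using tf unfolding false_twin_free_def by blast
  qed
  have imY: "?g ` Y \<subseteq> Pow W" by blast
  have cY: "card Y \<le> 2 ^ card W"
    using card_inj_on_le[OF injY imY] card_Pow[OF finW] finW by simp
  have "V = B \<union> W" using W_def BV by blast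
  then have "card V = card B + card W" using card_Un_disjoint[of B W] finW finV BV W_def
    by (metis Diff_disjoint finite_subset)
  moreover have "card B = card X + card Y"
  proof -
    have "finite X" using finV BV XYu by (meson finite_subset le_sup_iff)
    then show ?thesis using card_Un_disjoint[of X Y] finY XYd XYu by simp
  qed
  moreover have "card X = 1" using Xv by simp
  ultimately have cV: "card V = 1 + card Y + card W" by simp
  have "card W = 2"
  proof (rule ccontr)
    assume "card W \<noteq> 2"
    then have "card W \<le> 1" using cW by simp
    then have "(2::nat) ^ card W \<le> 2" by (cases "card W") auto
    then show False using cV c7 cY \<open>card W \<le> 1\<close> by simp
  qed
  then have cY4: "card Y = 4" using cV c7 cY by simp
  have "card (?g ` Y) = card (Pow W)" using card_image[OF injY] cY4 card_Pow[OF finW] \<open>card W = 2\<close> by simp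
  then have imEq: "?g ` Y = Pow W" using card_subset_eq[OF _ imY] finW by blast
  obtain w1 w2 where W12: "W = {w1, w2}" "w1 \<noteq> w2" using \<open>card W = 2\<close> unfolding card_2_iff by blast
  have "{w1, w2} \<in> ?g ` Y" "{w1} \<in> ?g ` Y" "{w2} \<in> ?g ` Y" using imEq W12(1) by auto
  then obtain y11 y10 y01 where ys: "y11 \<in> Y" "?g y11 = {w1, w2}" "y10 \<in> Y" "?g y10 = {w1}"
    "y01 \<in> Y" "?g y01 = {w2}" by (auto simp del: Int_iff)
  have wW: "w1 \<in> W" "w2 \<in> W" using W12 by blast+
  have memg: "(w \<in> ?g y) = E y w" if "w \<in> W" for w y using that unfolding nbhd_def by blast
  have g1: "w1 \<in> ?g y11" "w2 \<in> ?g y11" "w1 \<in> ?g y10" "w2 \<notin> ?g y10" "w2 \<in> ?g y01" "w1 \<notin> ?g y01"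
    using ys(2) ys(4) ys(6) W12(2) by simp_all
  have e: "E y11 w1" "E y11 w2" "E y10 w1" "\<not> E y10 w2" "E y01 w2" "\<not> E y01 w1"
    using g1 memg[OF wW(1)] memg[OF wW(2)] by simp_all
  have e2: "E w1 y11" "E w2 y11" "E w1 y10" "\<not> E w2 y10" "E w2 y01" "\<not> E w1 y01"
    using e by (simp_all add: Esym)
  show False using star_final[OF WB[OF wW(1)] WB[OF wW(2)] ys(1) e2(1,2) ys(3) e2(3,4) ys(5) e2(5,6)] .
qed

end


locale c4 = bs +
  fixes x1 x2 y1 y2
  assumes Xe: "X = {x1, x2}" and Ye: "Y = {y1, y2}" and xne: "x1 \<noteq> x2" and yne: "y1 \<noteq> y2"
begin

lemma swp: "c4 V E B Y X D1 D2 y1 y2 x1 x2"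
proof -
  have "bs V E B Y X D1 D2" unfolding bs_def
  proof (intro conjI)
    show "Y \<inter> X = {}" using XYd by blast
    show "Y \<union> X = B" using XYu by blast
    show "\<forall>x\<in>Y. \<forall>y\<in>X. E x y" using crossY by blast
  qed (fact sg tf BV Yne Xne Yind Xind Bmax cov)+
  moreover have "c4_axioms Y X y1 y2 x1 x2" unfolding c4_axioms_def using Xe Ye xne yne by blast
  ultimately show ?thesis unfolding c4_def by blast
qed


lemma Ycases: "z \<in> Y \<Longrightarrow> y \<in> Y \<Longrightarrow> y' \<in> Y \<Longrightarrow> y \<noteq> y' \<Longrightarrow> z = y \<or> z = y'"
  using Ye by blast
lemma otherY: "y \<in> Y \<Longrightarrow> \<exists>y'\<in>Y. y' \<noteq> y" using Ye yne by (cases "y = y1") auto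
lemma otherX: "x \<in> X \<Longrightarrow> \<exists>x'\<in>X. x' \<noteq> x" using Xe xne by (cases "x = x1") auto

lemma sepY':
  assumes "D = D1 \<or> D = D2" "D' = D1 \<or> D' = D2" "D \<noteq> D'" "(y1 \<in> D) = (y2 \<in> D)" "(y1 \<in> D') = (y2 \<in> D')"
  shows False
proof -
  obtain D'' where "D'' = D1 \<or> D'' = D2" "(y1 \<in> D'') \<noteq> (y2 \<in> D'')"
    using sepD[of y1 y2] Ye yne by blast
  then show False using assms by blast
qed

lemma C1Y:
  assumes w: "w \<notin> B" and y: "y \<in> Y" "y' \<in> Y" "E w y" "E w y'"
  shows "y = y'"
proof (rule ccontr)
  assume yy: "y \<noteq> y'"
  then have Yyy: "Y = {y, y'}" using Ye y by blast
  have wV: "w \<in> V" using y inV1 by blast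
  have "\<exists>x\<in>X. E w x"
  proof (rule ccontr)
    assume nx: "\<not> (\<exists>x\<in>X. E w x)"
    have "CB E (insert w B)" unfolding induces_complete_bipartite_def
    proof (intro exI conjI)
      show "insert w X \<noteq> {}" "Y \<noteq> {}" using Yne by auto
      show "insert w X \<inter> Y = {}" using XYd w XYu by blast
      show "insert w X \<union> Y = insert w B" using XYu by blast
      show "\<forall>x\<in>insert w X. \<forall>x'\<in>insert w X. \<not> E x x'"
      proof (intro ballI)
        fix a b assume "a \<in> insert w X" "b \<in> insert w X"
        then show "\<not> E a b" using nx Xind irr Esym by (metis insert_iff)
      qed
      show "\<forall>y\<in>Y. \<forall>y'\<in>Y. \<not> E y y'" by (rule Yind)
      show "\<forall>x\<in>insert w X. \<forall>y\<in>Y. E x y" using cross Yyy y by blast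
    qed
    moreover have "insert w B \<subseteq> V" using BV wV by blast
    ultimately have "insert w B = B" using Bmax by blast
    then show False using w by blast
  qed
  then obtain x where x: "x \<in> X" "E w x" by blast
  have "E x w" using x Esym by metis
  then obtain Dm where Dm: "Dm = D1 \<or> Dm = D2" "CB E Dm" "x \<in> Dm" "w \<in> Dm"
    using cov2[of x w] XB[OF x(1)] w by blast
  have notin: "z \<notin> Dm" if "z \<in> Y" "E w z" for z
  proof
    assume "z \<in> Dm"
    then have "E w z = (E w x = (\<not> E x z))" using tri[OF Dm(2) Dm(4) Dm(3)] by blast
    then show False using that x cross by blast
  qed
  have "\<not> E y y'" using Yind y by blast
  then obtain Dk where Dk: "Dk = D1 \<or> Dk = D2" "y \<in> Dk" "y' \<in> Dk"
    using cov3[of w y y'] y yy YB[OF y(1)] w by blast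
  have "y1 \<in> {y, y'}" "y2 \<in> {y, y'}" using Yyy Ye by auto
  then have "y1 \<in> Dk" "y2 \<in> Dk" using Dk by auto
  moreover have "y1 \<notin> Dm" "y2 \<notin> Dm" using notin[of y] notin[of y'] y \<open>y1 \<in> {y, y'}\<close> \<open>y2 \<in> {y, y'}\<close> by auto
  ultimately show False using sepY'[OF Dk(1) Dm(1)] by blast
qed

lemma inDX:
  assumes x: "x \<in> X" shows "x \<in> D1 \<or> x \<in> D2"
proof -
  have gen: "x \<in> D1 \<or> x \<in> D2" if r: "r \<notin> B" "r \<in> V" "yi \<in> Y" "E r yi" for r yi
  proof (cases "E x r")
    case True
    then show ?thesis using cov2[of x r] XB[OF x] r by blast
  next
    case False
    have "E yi x" using crossY x r by blast
    moreover have "E yi r" using r Esym by metis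
    moreover have "x \<noteq> r" using x r XB by blast
    ultimately show ?thesis using cov3[of yi x r] False YB[OF r(3)] r by blast
  qed
  obtain r where "r \<in> V \<and> r \<notin> B \<and> E r y1 \<and> \<not> E r y2 \<or> r \<in> V \<and> r \<notin> B \<and> E r y2 \<and> \<not> E r y1"
    using sep[of y1 y2] Ye yne by blast
  then show ?thesis using gen Ye by blast
qed

lemma C1X:
  assumes w: "w \<notin> B" and x: "x \<in> X" "x' \<in> X" "E w x" "E w x'"
  shows "x = x'"
proof -
  interpret sw: c4 V E B Y X D1 D2 y1 y2 x1 x2 by (rule swp)
  show ?thesis using sw.C1Y[OF w x] .
qed

lemma closeX:
  assumes w: "w \<notin> B" and u: "u \<in> X" "E w u" and z: "z \<notin> B" "E w z"
  shows "\<exists>u'\<in>B. E z u'"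
proof (rule ccontr)
  assume nz: "\<not> (\<exists>u'\<in>B. E z u')"
  obtain u' where u': "u' \<in> X" "u' \<noteq> u" using otherX[OF u(1)] by blast
  have nwu': "\<not> E w u'" using C1X[OF w u(1) u'(1) u(2)] u' by blast
  have nuz: "\<not> E u z" using nz XB[OF u(1)] Esym by metis
  have "u \<noteq> z" using XB[OF u(1)] z by blast
  then obtain Di where Di: "Di = D1 \<or> Di = D2" "CB E Di" "w \<in> Di" "u \<in> Di" "z \<in> Di"
    using cov3[of w u z] u nuz XB[OF u(1)] w z by blast
  have u'notin: "u' \<notin> D" if "CB E D" "u \<in> D" "w \<in> D" for D
  proof
    assume "u' \<in> D"
    then have "E u' w = (E u' u = (\<not> E u w))" using tri[OF that(1) _ that(2) that(3)] by blast
    moreover have "\<not> E u' u" using Xind u u' by blast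
    moreover have "E u w" using u Esym by metis
    ultimately have "E u' w" by blast
    then show False using nwu' Esym by metis
  qed
  obtain q where q: "q \<in> Y" "\<not> E w q"
  proof -
    have "\<not> (E w y1 \<and> E w y2)" using C1Y[OF w, of y1 y2] Ye yne by blast
    then show ?thesis using that Ye by blast
  qed
  have "E u q" using cross u q by blast
  moreover have "\<not> E q w" using q Esym by metis
  moreover have "q \<noteq> w" using q w YB by blast
  moreover have "E u w" using u Esym by metis
  ultimately obtain Dj where Dj: "Dj = D1 \<or> Dj = D2" "CB E Dj" "u \<in> Dj" "q \<in> Dj" "w \<in> Dj"
    using cov3[of u q w] XB[OF u(1)] w by blast
  have "q \<notin> Di"
  proof
    assume "q \<in> Di"
    then have "E q z = (E q u = (\<not> E u z))" using tri[OF Di(2) _ Di(4) Di(5)] by blast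
    moreover have "E q u" using crossY u q by blast
    ultimately have "E z q" using nuz Esym by metis
    then show False using nz YB[OF q(1)] by blast
  qed
  then have "Di \<noteq> Dj" using Dj by blast
  moreover have "u' \<notin> Di" "u' \<notin> Dj" using u'notin Di Dj by blast+
  ultimately show False using inDX[OF u'(1)] Di(1) Dj(1) by blast
qed

lemma starD:
  assumes w: "w \<notin> B" and x: "x \<in> X" "E w x" and ny: "\<forall>y\<in>Y. \<not> E w y"
  shows "\<exists>D. (D = D1 \<or> D = D2) \<and> CB E D \<and> x \<in> D \<and> w \<in> D \<and> Y \<subseteq> D \<and> (\<forall>x'\<in>X. x' \<noteq> x \<longrightarrow> x' \<notin> D)"
proof -
  let ?L = "insert w Y"
  have xw: "E x w" using x Esym by metis
  have "x \<notin> ?L" using x w XYd XYu by blast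
  moreover have "?L \<noteq> {}" by blast
  moreover have "\<forall>l\<in>?L. E x l" using xw cross x by blast
  moreover have "\<forall>l\<in>?L. \<forall>l'\<in>?L. \<not> E l l'"
  proof (intro ballI)
    fix l l' assume "l \<in> ?L" "l' \<in> ?L"
    then show "\<not> E l l'" using ny Yind irr Esym by (metis insert_iff)
  qed
  moreover have "insert x ?L \<inter> B \<noteq> {}" using x XYu by blast
  moreover have "\<not> insert x ?L \<subseteq> B" using w by blast
  ultimately obtain D where D: "D = D1 \<or> D = D2" "CB E D" "insert x ?L \<subseteq> D"
    using cov_star[of x ?L] by blast
  have "x' \<notin> D" if x': "x' \<in> X" "x' \<noteq> x" for x'
  proof
    assume "x' \<in> D"
    then have "E x' w = (E x' x = (\<not> E x w))" using tri[OF D(2), of x' x w] D(3) by blast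
    moreover have "\<not> E x' x" using Xind x x' by blast
    ultimately have "E w x'" using xw Esym by metis
    then show False using C1X[OF w x(1) x'(1) x(2)] x' by blast
  qed
  then show ?thesis using D by blast
qed

lemma cornerD:
  assumes w: "w \<notin> B" and x: "x \<in> X" "E w x" and y: "y \<in> Y" "E w y"
  shows "\<exists>D. (D = D1 \<or> D = D2) \<and> CB E D \<and> x \<in> D \<and> w \<in> D \<and> y \<notin> D \<and>
     (\<forall>y'\<in>Y. y' \<noteq> y \<longrightarrow> y' \<in> D) \<and> (\<forall>x'\<in>X. x' \<noteq> x \<longrightarrow> x' \<notin> D)"
proof -
  obtain y' where y': "y' \<in> Y" "y' \<noteq> y" using otherY[OF y(1)] by blast
  have nwy': "\<not> E w y'" using C1Y[OF w y(1) y'(1) y(2)] y' by blast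
  have "E x y'" using cross x y' by blast
  moreover have "E x w" using x Esym by metis
  moreover have "\<not> E y' w" using nwy' Esym by metis
  moreover have "y' \<noteq> w" using y' w YB by blast
  ultimately obtain D where D: "D = D1 \<or> D = D2" "CB E D" "x \<in> D" "y' \<in> D" "w \<in> D"
    using cov3[of x y' w] XB[OF x(1)] w by blast
  have "y \<notin> D"
  proof
    assume "y \<in> D"
    then have "E w y = (E w x = (\<not> E x y))" using tri[OF D(2) D(5) D(3)] by blast
    then show False using x y cross by blast
  qed
  moreover have "\<forall>y''\<in>Y. y'' \<noteq> y \<longrightarrow> y'' \<in> D" using Ycases[OF _ y(1) y'(1)] y' D(4) by blast
  moreover have "x' \<notin> D" if x': "x' \<in> X" "x' \<noteq> x" for x'
  proof
    assume "x' \<in> D"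
    then have "E x' w = (E x' x = (\<not> E x w))" using tri[OF D(2), of x' x w] D by blast
    moreover have "\<not> E x' x" using Xind x x' by blast
    moreover have "E x w" using x Esym by metis
    ultimately have "E w x'" using Esym by metis
    then show False using C1X[OF w x(1) x'(1) x(2)] x' by blast
  qed
  ultimately show ?thesis using D by blast
qed


lemma bothY: "Y \<subseteq> D \<Longrightarrow> (y1 \<in> D) = (y2 \<in> D)" using Ye by blast

lemma S_twoX:
  assumes w: "w \<notin> B" "x \<in> X" "E w x" "\<forall>y\<in>Y. \<not> E w y"
    and z: "z \<notin> B" "x' \<in> X" "E z x'" "\<forall>y\<in>Y. \<not> E z y" and xx: "x \<noteq> x'"
  shows False
proof -
  obtain Dw where Dw: "Dw = D1 \<or> Dw = D2" "Y \<subseteq> Dw" "\<forall>u\<in>X. u \<noteq> x \<longrightarrow> u \<notin> Dw"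
    using starD[OF w] by blast
  obtain Dz where Dz: "Dz = D1 \<or> Dz = D2" "Y \<subseteq> Dz" "x' \<in> Dz"
    using starD[OF z] by blast
  have "Dw \<noteq> Dz" using Dw(3) Dz(3) z(2) xx by auto
  then show False using sepY'[OF Dw(1) Dz(1)] bothY[OF Dw(2)] bothY[OF Dz(2)] by blast
qed

lemma S_adjsame:
  assumes w: "w \<notin> B" "x \<in> X" "E w x" "\<forall>y\<in>Y. \<not> E w y"
    and z: "z \<notin> B" "E z x" "\<forall>y\<in>Y. \<not> E z y" and wz: "E w z"
  shows False
proof -
  obtain Dw where Dw: "Dw = D1 \<or> Dw = D2" "CB E Dw" "x \<in> Dw" "w \<in> Dw" "Y \<subseteq> Dw"
    using starD[OF w] by blast
  obtain Dz where Dz: "Dz = D1 \<or> Dz = D2" "Y \<subseteq> Dz" "z \<in> Dz"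
    using starD[OF z(1) w(2) z(2,3)] by blast
  have "Dw \<noteq> Dz"
  proof
    assume "Dw = Dz"
    then have "z \<in> Dw" using Dz by blast
    then have "E w z = (E w x = (\<not> E x z))" using tri[OF Dw(2) Dw(4) Dw(3)] by blast
    moreover have "E x z" using z Esym by metis
    ultimately show False using wz w by blast
  qed
  then show False using sepY'[OF Dw(1) Dz(1)] bothY[OF Dw(5)] bothY[OF Dz(2)] by blast
qed

lemma S_cross:
  assumes w: "w \<notin> B" "x \<in> X" "E w x" "\<forall>y\<in>Y. \<not> E w y"
    and z: "z \<notin> B" "y \<in> Y" "E z y" "\<forall>x\<in>X. \<not> E z x" and wz: "E w z"
  shows False
proof -
  interpret sw: c4 V E B Y X D1 D2 y1 y2 x1 x2 by (rule swp)
  obtain Dw where Dw: "Dw = D1 \<or> Dw = D2" "CB E Dw" "x \<in> Dw" "w \<in> Dw" "Y \<subseteq> Dw"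
     "\<forall>u\<in>X. u \<noteq> x \<longrightarrow> u \<notin> Dw"
    using starD[OF w] by blast
  obtain Dz where Dz: "Dz = D1 \<or> Dz = D2" "CB E Dz" "y \<in> Dz" "z \<in> Dz" "X \<subseteq> Dz"
     "\<forall>u\<in>Y. u \<noteq> y \<longrightarrow> u \<notin> Dz"
    using sw.starD[OF z] by blast
  obtain x' where x': "x' \<in> X" "x' \<noteq> x" using otherX[OF w(2)] by blast
  obtain y' where y': "y' \<in> Y" "y' \<noteq> y" using otherY[OF z(2)] by blast
  have "Dw \<noteq> Dz" using Dw(6) Dz(5) x' by blast
  have nxz: "\<not> E x z" using z w(2) Esym by metis
  have "x \<noteq> z" using w(2) z(1) XB by blast
  then obtain D where D: "D = D1 \<or> D = D2" "CB E D" "w \<in> D" "x \<in> D" "z \<in> D"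
    using cov3[of w x z] w(3) wz nxz XB[OF w(2)] w(1) by blast
  have "D = Dw \<or> D = Dz" using D(1) Dw(1) Dz(1) \<open>Dw \<noteq> Dz\<close> by blast
  then show False
  proof
    assume "D = Dw"
    then have "y' \<in> D" using Dw(5) y' by blast
    then have "E z y' = (E z w = (\<not> E w y'))" using tri[OF D(2) D(5) D(3)] by blast
    moreover have "E z w" using wz Esym by metis
    ultimately have "E z y'" using w(4) y' by blast
    then show False using C1Y[OF z(1) z(2) y'(1) z(3)] y' by blast
  next
    assume "D = Dz"
    then have "x' \<in> D" using Dz(5) x' by blast
    then have "E x' w = (E x' x = (\<not> E x w))" using tri[OF D(2) _ D(4) D(3)] by blast
    moreover have "\<not> E x' x" using Xind x' w(2) by blast
    moreover have "E x w" using w Esym by metis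
    ultimately have "E w x'" using Esym by metis
    then show False using C1X[OF w(1) w(2) x'(1) w(3)] x' by blast
  qed
qed

lemma cornerDD:
  assumes w: "w \<notin> B" and x: "x \<in> X" "E w x" and y: "y \<in> Y" "E w y"
  shows "\<exists>Da Db. (Da = D1 \<or> Da = D2) \<and> (Db = D1 \<or> Db = D2) \<and> CB E Da \<and> CB E Db \<and>
     x \<in> Da \<and> w \<in> Da \<and> y \<notin> Da \<and> (\<forall>y'\<in>Y. y' \<noteq> y \<longrightarrow> y' \<in> Da) \<and> (\<forall>x'\<in>X. x' \<noteq> x \<longrightarrow> x' \<notin> Da) \<and>
     y \<in> Db \<and> w \<in> Db \<and> x \<notin> Db \<and> (\<forall>x'\<in>X. x' \<noteq> x \<longrightarrow> x' \<in> Db) \<and> (\<forall>y'\<in>Y. y' \<noteq> y \<longrightarrow> y' \<notin> Db)"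
proof -
  interpret sw: c4 V E B Y X D1 D2 y1 y2 x1 x2 by (rule swp)
  show ?thesis using cornerD[OF w x y] sw.cornerD[OF w y x] by blast
qed

lemma SC:
  assumes w: "w \<notin> B" "x \<in> X" "E w x" "\<forall>y\<in>Y. \<not> E w y"
    and z: "z \<notin> B" "s \<in> X" "E z s" "t \<in> Y" "E z t"
  shows False
proof -
  obtain Dw where Dw: "Dw = D1 \<or> Dw = D2" "Y \<subseteq> Dw"
    using starD[OF w] by blast
  obtain Da Db where D: "Da = D1 \<or> Da = D2" "Db = D1 \<or> Db = D2" "t \<notin> Da" "\<forall>y'\<in>Y. y' \<noteq> t \<longrightarrow> y' \<notin> Db"
    "s \<in> Da" "s \<notin> Db"
    using cornerDD[OF z(1) z(2,3) z(4,5)] by blast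
  obtain t' where t': "t' \<in> Y" "t' \<noteq> t" using otherY[OF z(4)] by blast
  have "Da \<noteq> Db" using D by blast
  moreover have "Dw \<noteq> Da" using Dw(2) D(3) z(4) by blast
  moreover have "Dw \<noteq> Db" using Dw(2) D(4) t' by blast
  ultimately show False using Dw(1) D(1,2) by blast
qed

lemma CC:
  assumes w: "w \<notin> B" "x \<in> X" "E w x" "y \<in> Y" "E w y"
    and z: "z \<notin> B" "s \<in> X" "E z s" "t \<in> Y" "E z t"
  shows "(s = x \<and> t = y) \<or> (s \<noteq> x \<and> t \<noteq> y)"
proof -
  obtain Da Db where D: "Da = D1 \<or> Da = D2" "Db = D1 \<or> Db = D2"
     "x \<in> Da" "y \<notin> Da" "\<forall>y'\<in>Y. y' \<noteq> y \<longrightarrow> y' \<in> Da" "\<forall>x'\<in>X. x' \<noteq> x \<longrightarrow> x' \<notin> Da"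
     "y \<in> Db" "x \<notin> Db" "\<forall>x'\<in>X. x' \<noteq> x \<longrightarrow> x' \<in> Db" "\<forall>y'\<in>Y. y' \<noteq> y \<longrightarrow> y' \<notin> Db"
    using cornerDD[OF w] by blast
  obtain Dz where Dz: "Dz = D1 \<or> Dz = D2" "s \<in> Dz" "t \<notin> Dz"
    using cornerD[OF z] by blast
  have "Da \<noteq> Db" using D by blast
  then have "Dz = Da \<or> Dz = Db" using Dz(1) D(1,2) by blast
  then show ?thesis
  proof
    assume "Dz = Da"
    then show ?thesis using D(5,6) Dz z(2,4) by blast
  next
    assume "Dz = Db"
    then show ?thesis using D(7,8) Dz by blast
  qed
qed

lemma CCsame:
  assumes w: "w \<notin> B" "x \<in> X" "E w x" "y \<in> Y" "E w y"
    and z: "z \<notin> B" "E z x" "E z y" and wz: "E w z"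
  shows False
proof -
  obtain Da Db where D: "Da = D1 \<or> Da = D2" "Db = D1 \<or> Db = D2" "CB E Da"
     "x \<in> Da" "w \<in> Da" "x \<notin> Db"
    using cornerDD[OF w] by blast
  obtain Dz where Dz: "Dz = D1 \<or> Dz = D2" "x \<in> Dz" "z \<in> Dz"
    using cornerD[OF z(1) w(2) z(2) w(4) z(3)] by blast
  have "Dz = Da" using D Dz by blast
  then have "z \<in> Da" using Dz by blast
  then have "E w z = (E w x = (\<not> E x z))" using tri[OF D(3) D(5) D(4)] by blast
  moreover have "E x z" using z Esym by metis
  ultimately show False using wz w by blast
qed

lemma CCopp:
  assumes w: "w \<notin> B" "x \<in> X" "E w x" "y \<in> Y" "E w y"
    and z: "z \<notin> B" "x' \<in> X" "E z x'" "y' \<in> Y" "E z y'" and xx: "x \<noteq> x'" and yy: "y \<noteq> y'"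
  shows "E w z"
proof -
  obtain Da Db where D: "Da = D1 \<or> Da = D2" "Db = D1 \<or> Db = D2" "CB E Da"
     "x \<in> Da" "w \<in> Da" "x \<notin> Db"
    using cornerDD[OF w] by blast
  obtain Dz Dz' where Dz: "Dz' = D1 \<or> Dz' = D2" "z \<in> Dz'" "\<forall>u\<in>X. u \<noteq> x' \<longrightarrow> u \<in> Dz'"
    using cornerDD[OF z] by blast
  have "x \<in> Dz'" using Dz(3) w(2) xx by blast
  then have "Dz' = Da" using D Dz(1) by blast
  then have "z \<in> Da" using Dz by blast
  then have "E z w = (E z x = (\<not> E x w))" using tri[OF D(3) _ D(4) D(5)] by blast
  moreover have "\<not> E z x" using C1X[OF z(1) z(2) w(2) z(3)] xx by blast
  moreover have "E x w" using w Esym by metis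
  ultimately show "E w z" using Esym by metis
qed


lemma cls:
  assumes "\<exists>u\<in>B. E w u"
  shows "(\<exists>x\<in>X. \<exists>y\<in>Y. E w x \<and> E w y) \<or> (\<exists>x\<in>X. E w x \<and> (\<forall>y\<in>Y. \<not> E w y)) \<or>
         (\<exists>y\<in>Y. E w y \<and> (\<forall>x\<in>X. \<not> E w x))"
  using assms XYu by blast

lemma ADJ:
  assumes w: "w \<notin> B" "\<exists>u\<in>B. E w u" and z: "z \<notin> B" "\<exists>u\<in>B. E z u" and wz: "E w z"
  shows "\<exists>x x' y y'. x \<in> X \<and> x' \<in> X \<and> y \<in> Y \<and> y' \<in> Y \<and> x \<noteq> x' \<and> y \<noteq> y' \<and>
           E w x \<and> E w y \<and> E z x' \<and> E z y'"
proof -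
  interpret sw: c4 V E B Y X D1 D2 y1 y2 x1 x2 by (rule swp)
  have zw: "E z w" using wz Esym by metis
  from cls[OF w(2)] show ?thesis
  proof (elim disjE bexE conjE)
    fix x y assume wc: "x \<in> X" "y \<in> Y" "E w x" "E w y"
    from cls[OF z(2)] show ?thesis
    proof (elim disjE bexE conjE)
      fix s t assume zc: "s \<in> X" "t \<in> Y" "E z s" "E z t"
      have "(s = x \<and> t = y) \<or> (s \<noteq> x \<and> t \<noteq> y)" using CC[OF w(1) wc(1,3) wc(2,4) z(1) zc(1,3) zc(2,4)] .
      then show ?thesis
      proof
        assume "s = x \<and> t = y"
        then show ?thesis using CCsame[OF w(1) wc(1,3) wc(2,4) z(1) _ _ wz] zc by blast
      next
        assume "s \<noteq> x \<and> t \<noteq> y"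
        then show ?thesis using wc zc by blast
      qed
    next
      fix s assume "s \<in> X" "E z s" "\<forall>y\<in>Y. \<not> E z y"
      then show ?thesis using SC[OF z(1) _ _ _ w(1) wc(1) wc(3) wc(2) wc(4)] by blast
    next
      fix t assume "t \<in> Y" "E z t" "\<forall>x\<in>X. \<not> E z x"
      then show ?thesis using sw.SC[OF z(1) _ _ _ w(1) wc(2) wc(4) wc(1) wc(3)] by blast
    qed
  next
    fix x assume ws: "x \<in> X" "E w x" "\<forall>y\<in>Y. \<not> E w y"
    from cls[OF z(2)] show ?thesis
    proof (elim disjE bexE conjE)
      fix s t assume zc: "s \<in> X" "t \<in> Y" "E z s" "E z t"
      then show ?thesis using SC[OF w(1) ws z(1) zc(1,3) zc(2,4)] by blast
    next
      fix s assume zs: "s \<in> X" "E z s" "\<forall>y\<in>Y. \<not> E z y"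
      show ?thesis
      proof (cases "s = x")
        case True
        then show ?thesis using S_adjsame[OF w(1) ws z(1) _ zs(3) wz] zs by blast
      next
        case False
        then show ?thesis using S_twoX[OF w(1) ws z(1) zs] by auto
      qed
    next
      fix t assume "t \<in> Y" "E z t" "\<forall>x\<in>X. \<not> E z x"
      then show ?thesis using S_cross[OF w(1) ws z(1) _ _ _ wz] by blast
    qed
  next
    fix y assume ws: "y \<in> Y" "E w y" "\<forall>x\<in>X. \<not> E w x"
    from cls[OF z(2)] show ?thesis
    proof (elim disjE bexE conjE)
      fix s t assume zc: "s \<in> X" "t \<in> Y" "E z s" "E z t"
      then show ?thesis using sw.SC[OF w(1) ws z(1) zc(2,4) zc(1,3)] by blast
    next
      fix s assume "s \<in> X" "E z s" "\<forall>y\<in>Y. \<not> E z y"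
      then show ?thesis using sw.S_cross[OF w(1) ws z(1) _ _ _ wz] by blast
    next
      fix t assume zs: "t \<in> Y" "E z t" "\<forall>x\<in>X. \<not> E z x"
      show ?thesis
      proof (cases "t = y")
        case True
        then show ?thesis using sw.S_adjsame[OF w(1) ws z(1) _ zs(3) wz] zs by blast
      next
        case False
        then show ?thesis using sw.S_twoX[OF w(1) ws z(1) zs] by auto
      qed
    qed
  qed
qed

lemma transfer:
  assumes w: "w \<notin> B" "\<exists>u\<in>B. E w u" and w': "w' \<notin> B" "\<exists>u\<in>B. E w' u"
    and same: "\<forall>u\<in>B. E w u = E w' u"
    and u: "u \<notin> B" "\<exists>b\<in>B. E u b" and wu: "E w u"
  shows "E w' u"
proof -
  obtain x x' y y' where a: "x \<in> X" "x' \<in> X" "y \<in> Y" "y' \<in> Y" "x \<noteq> x'" "y \<noteq> y'"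
    "E w x" "E w y" "E u x'" "E u y'"
    using ADJ[OF w u wu] by blast
  have w'a: "E w' x" "E w' y" using same a XB YB by blast+
  show ?thesis
  proof (cases "u = w'")
    case True
    then show ?thesis using C1X[OF w'(1) a(1) a(2) w'a(1)] a(5,9) by blast
  next
    case False
    show ?thesis using CCopp[OF w'(1) a(1) w'a(1) a(3) w'a(2) u(1) a(2) a(9) a(4) a(10) a(5) a(6)] .
  qed
qed

lemma twin:
  assumes clo: "\<forall>u. u \<in> V \<longrightarrow> u \<notin> B \<longrightarrow> (\<exists>b\<in>B. E u b)"
    and w: "w \<in> V" "w \<notin> B" and w': "w' \<in> V" "w' \<notin> B" and ne: "w \<noteq> w'"
    and same: "\<forall>u\<in>B. E w u = E w' u"
  shows False
proof -
  have hw: "\<exists>u\<in>B. E w u" "\<exists>u\<in>B. E w' u" using clo w w' by blast+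
  have same': "\<forall>u\<in>B. E w' u = E w u" using same by blast
  have "E w u = E w' u" for u
  proof (cases "u \<in> B")
    case True then show ?thesis using same by blast
  next
    case False
    show ?thesis
    proof
      assume "E w u"
      moreover have "\<exists>b\<in>B. E u b" using clo False \<open>E w u\<close> inV2 by blast
      ultimately show "E w' u" using transfer[OF w(2) hw(1) w'(2) hw(2) same False] by blast
    next
      assume "E w' u"
      moreover have "\<exists>b\<in>B. E u b" using clo False \<open>E w' u\<close> inV2 by blast
      ultimately show "E w u" using transfer[OF w'(2) hw(2) w(2) hw(1) same' False] by blast
    qed
  qed
  then have "nbhd E w = nbhd E w'" unfolding nbhd_def by blast
  then show False using tf w w' ne unfolding false_twin_free_def by blast
qed

lemma PAIRC:
  assumes clo: "\<forall>u. u \<in> V \<longrightarrow> u \<notin> B \<longrightarrow> (\<exists>b\<in>B. E u b)"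
    and w: "w \<in> V" "w \<notin> B" and w': "w' \<in> V" "w' \<notin> B" and ne: "w \<noteq> w'"
    and c: "x \<in> X" "y \<in> Y" "E w x" "E w y"
  shows "\<exists>x'\<in>X. \<exists>y'\<in>Y. x' \<noteq> x \<and> y' \<noteq> y \<and> E w' x' \<and> E w' y'"
proof -
  interpret sw: c4 V E B Y X D1 D2 y1 y2 x1 x2 by (rule swp)
  have hw': "\<exists>u\<in>B. E w' u" using clo w' by blast
  from cls[OF hw'] show ?thesis
  proof (elim disjE bexE conjE)
    fix s t assume zc: "s \<in> X" "t \<in> Y" "E w' s" "E w' t"
    have "(s = x \<and> t = y) \<or> (s \<noteq> x \<and> t \<noteq> y)" using CC[OF w(2) c(1,3) c(2,4) w'(2) zc(1,3) zc(2,4)] .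
    then show ?thesis
    proof
      assume st: "s = x \<and> t = y"
      have "\<forall>u\<in>B. E w u = E w' u"
      proof
        fix u assume "u \<in> B"
        then have "u \<in> X \<or> u \<in> Y" using XYu by blast
        then show "E w u = E w' u"
        proof
          assume uX: "u \<in> X"
          have "E w u = (u = x)" using C1X[OF w(2) c(1) uX c(3)] c(3) by blast
          moreover have "E w' u = (u = x)" using C1X[OF w'(2) zc(1) uX zc(3)] zc(3) st by blast
          ultimately show ?thesis by simp
        next
          assume uY: "u \<in> Y"
          have "E w u = (u = y)" using C1Y[OF w(2) c(2) uY c(4)] c(4) by blast
          moreover have "E w' u = (u = y)" using C1Y[OF w'(2) zc(2) uY zc(4)] zc(4) st by blast
          ultimately show ?thesis by simp
        qed
      qed
      then show ?thesis using twin[OF clo w w' ne] by blast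
    next
      assume "s \<noteq> x \<and> t \<noteq> y" then show ?thesis using zc by blast
    qed
  next
    fix s assume "s \<in> X" "E w' s" "\<forall>y\<in>Y. \<not> E w' y"
    then show ?thesis using SC[OF w'(2) _ _ _ w(2) c(1) c(3) c(2) c(4)] by blast
  next
    fix t assume "t \<in> Y" "E w' t" "\<forall>x\<in>X. \<not> E w' x"
    then show ?thesis using sw.SC[OF w'(2) _ _ _ w(2) c(2) c(4) c(1) c(3)] by blast
  qed
qed

lemma PAIRS:
  assumes clo: "\<forall>u. u \<in> V \<longrightarrow> u \<notin> B \<longrightarrow> (\<exists>b\<in>B. E u b)"
    and w: "w \<in> V" "w \<notin> B" and w': "w' \<in> V" "w' \<notin> B" and ne: "w \<noteq> w'"
    and c: "x \<in> X" "E w x" "\<forall>y\<in>Y. \<not> E w y"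
  shows "\<forall>x\<in>X. \<not> E w' x"
proof -
  have hw': "\<exists>u\<in>B. E w' u" using clo w' by blast
  from cls[OF hw'] show ?thesis
  proof (elim disjE bexE conjE)
    fix s t assume zc: "s \<in> X" "t \<in> Y" "E w' s" "E w' t"
    then show ?thesis using SC[OF w(2) c w'(2) zc(1,3) zc(2,4)] by blast
  next
    fix s assume zs: "s \<in> X" "E w' s" "\<forall>y\<in>Y. \<not> E w' y"
    show ?thesis
    proof (cases "s = x")
      case True
      have "\<forall>u\<in>B. E w u = E w' u"
      proof
        fix u assume "u \<in> B"
        then have "u \<in> X \<or> u \<in> Y" using XYu by blast
        then show "E w u = E w' u"
        proof
          assume uX: "u \<in> X"
          have "E w u = (u = x)" using C1X[OF w(2) c(1) uX c(2)] c(2) by blast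
          moreover have "E w' u = (u = x)" using C1X[OF w'(2) zs(1) uX zs(2)] zs(2) True by blast
          ultimately show ?thesis by simp
        next
          assume uY: "u \<in> Y"
          then show ?thesis using c(3) zs(3) by blast
        qed
      qed
      then show ?thesis using twin[OF clo w w' ne] by blast
    next
      case False
      then show ?thesis using S_twoX[OF w(2) c w'(2) zs] by auto
    qed
  next
    fix t assume "t \<in> Y" "E w' t" "\<forall>x\<in>X. \<not> E w' x"
    then show ?thesis by blast
  qed
qed


lemma three:
  assumes clo: "\<forall>u. u \<in> V \<longrightarrow> u \<notin> B \<longrightarrow> (\<exists>b\<in>B. E u b)"
    and w1: "w1 \<in> V" "w1 \<notin> B" and w2: "w2 \<in> V" "w2 \<notin> B" and w3: "w3 \<in> V" "w3 \<notin> B"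
    and ne: "w1 \<noteq> w2" "w1 \<noteq> w3" "w2 \<noteq> w3"
  shows False
proof -
  interpret sw: c4 V E B Y X D1 D2 y1 y2 x1 x2 by (rule swp)
  have h: "\<exists>u\<in>B. E w1 u" "\<exists>u\<in>B. E w2 u" "\<exists>u\<in>B. E w3 u" using clo w1 w2 w3 by blast+
  from cls[OF h(1)] show False
  proof (elim disjE bexE conjE)
    fix x y assume c: "x \<in> X" "y \<in> Y" "E w1 x" "E w1 y"
    obtain a2 b2 where c2: "a2 \<in> X" "b2 \<in> Y" "a2 \<noteq> x" "E w2 a2" "E w2 b2"
      using PAIRC[OF clo w1 w2 ne(1) c] by blast
    obtain a3 where c3: "a3 \<in> X" "a3 \<noteq> x" "E w3 a3"
      using PAIRC[OF clo w1 w3 ne(2) c] by blast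
    obtain a3' where c3': "a3' \<in> X" "a3' \<noteq> a2" "E w3 a3'"
      using PAIRC[OF clo w2 w3 ne(3) c2(1) c2(2) c2(4) c2(5)] by blast
    have "a3 = a3'" using C1X[OF w3(2) c3(1) c3'(1) c3(3) c3'(3)] .
    then show False using c(1) c2(1,3) c3(1,2) c3'(2) Xe by blast
  next
    fix x assume c: "x \<in> X" "E w1 x" "\<forall>y\<in>Y. \<not> E w1 y"
    have n2: "\<forall>x\<in>X. \<not> E w2 x" using PAIRS[OF clo w1 w2 ne(1) c] .
    have n3: "\<forall>x\<in>X. \<not> E w3 x" using PAIRS[OF clo w1 w3 ne(2) c] .
    obtain y2' where "y2' \<in> Y" "E w2 y2'" using h(2) n2 XYu by blast
    then have "\<forall>y\<in>Y. \<not> E w3 y" using sw.PAIRS[OF clo w2 w3 ne(3) _ _ n2] by blast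
    then show False using h(3) n3 XYu by blast
  next
    fix y assume c: "y \<in> Y" "E w1 y" "\<forall>x\<in>X. \<not> E w1 x"
    have n2: "\<forall>y\<in>Y. \<not> E w2 y" using sw.PAIRS[OF clo w1 w2 ne(1) c] .
    have n3: "\<forall>y\<in>Y. \<not> E w3 y" using sw.PAIRS[OF clo w1 w3 ne(2) c] .
    obtain x2' where "x2' \<in> X" "E w2 x2'" using h(2) n2 XYu by blast
    then have "\<forall>x\<in>X. \<not> E w3 x" using PAIRS[OF clo w2 w3 ne(3) _ _ n2] by blast
    then show False using h(3) n3 XYu by blast
  qed
qed

lemma c4_false:
  assumes conn: "\<forall>x\<in>V. \<forall>y\<in>V. E\<^sup>*\<^sup>* x y" and c7: "7 \<le> card V"
  shows False
proof -
  interpret sw: c4 V E B Y X D1 D2 y1 y2 x1 x2 by (rule swp)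
  let ?U = "B \<union> {w. w \<in> V \<and> w \<notin> B \<and> (\<exists>u\<in>B. E w u)}"
  have cl: "t \<in> ?U" if s: "s \<in> ?U" and st: "E s t" for s t
  proof (cases "t \<in> B")
    case True then show ?thesis by blast
  next
    case tB: False
    have tV: "t \<in> V" using st inV2 by blast
    have ts: "E t s" using st Esym by metis
    show ?thesis
    proof (cases "s \<in> B")
      case True
      then show ?thesis using tB tV ts by blast
    next
      case False
      then obtain u where u: "u \<in> B" "E s u" using s by blast
      then have "u \<in> X \<or> u \<in> Y" using XYu by blast
      then have "\<exists>u'\<in>B. E t u'"
      proof
        assume "u \<in> X" then show ?thesis using closeX[OF False _ u(2) tB st] by blast
      next
        assume "u \<in> Y" then show ?thesis using sw.closeX[OF False _ u(2) tB st] by blast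
      qed
      then show ?thesis using tB tV by blast
    qed
  qed
  have x1B: "x1 \<in> B" using Xe XYu by blast
  have VU: "V \<subseteq> ?U" using closure_all[OF conn, of x1 ?U] cl x1B BV by blast
  have clo: "\<forall>u. u \<in> V \<longrightarrow> u \<notin> B \<longrightarrow> (\<exists>b\<in>B. E u b)" using VU by blast
  define W where "W = V - B"
  have finW: "finite W" using finV W_def by blast
  have cW: "card W \<le> 2"
  proof (rule ccontr)
    assume "\<not> card W \<le> 2"
    then have "Suc 2 \<le> card W" by simp
    then obtain a A where A: "W = insert a A" "a \<notin> A" "Suc 1 \<le> card A" "finite A"
      using card_le_Suc_iff[of 2 W] by auto
    then obtain b A' where A': "A = insert b A'" "b \<notin> A'" "Suc 0 \<le> card A'" "finite A'"
      using card_le_Suc_iff[of 1 A] by auto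
    then have "A' \<noteq> {}" by auto
    then obtain c where "c \<in> A'" by blast
    then have "a \<in> W" "b \<in> W" "c \<in> W" "a \<noteq> b" "a \<noteq> c" "b \<noteq> c" using A A' by auto
    moreover have "a \<in> V" "a \<notin> B" "b \<in> V" "b \<notin> B" "c \<in> V" "c \<notin> B"
      using \<open>a \<in> W\<close> \<open>b \<in> W\<close> \<open>c \<in> W\<close> W_def by blast+
    ultimately show False using three[OF clo, of a b c] by blast
  qed
  have "B = {x1, x2, y1, y2}" using Xe Ye XYu by blast
  moreover have "x1 \<noteq> y1" "x1 \<noteq> y2" "x2 \<noteq> y1" "x2 \<noteq> y2" using XYd Xe Ye by blast+
  ultimately have cB: "card B = 4" using xne yne by simp
  have "V = B \<union> W" using W_def BV by blast
  then have "card V = card B + card W" using card_Un_disjoint[of B W] finW finV BV W_def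
    by (metis Diff_disjoint finite_subset)
  then show False using cB cW c7 by simp
qed

end


lemma card_le2_cover:
  assumes "finite A" "card A \<le> 2"
  shows "\<exists>p q. A \<subseteq> {p, q}"
proof -
  have "card A = 0 \<or> card A = 1 \<or> card A = 2" using assms(2) by auto
  then show ?thesis
  proof (elim disjE)
    assume "card A = 0" then have "A = {}" using assms(1) by simp
    then show ?thesis by blast
  next
    assume "card A = 1" then obtain p where "A = {p}" using card_1_singletonE by blast
    then show ?thesis by blast
  next
    assume "card A = 2" then obtain p q where "A = {p, q}" unfolding card_2_iff by blast
    then show ?thesis by blast
  qed
qed

theorem lemma3:
  fixes V :: "'a set" and E :: "'a \<Rightarrow> 'a \<Rightarrow> bool" and B :: "'a set"
  assumes "simple_graph V E"
    and "connected_graph V E"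
    and "false_twin_free V E"
    and "card V \<ge> 7"
    and "B \<in> bicliques V E"
    and "has_induced_claw E B \<or> induces_C4 E B"
  shows "degree (KB_adj V E) B \<ge> 3"
proof (rule ccontr)
  assume "\<not> degree (KB_adj V E) B \<ge> 3"
  then have c2: "card {u. KB_adj V E B u} \<le> 2" unfolding degree_def by simp
  have sg: "simple_graph V E" by fact
  have finV: "finite V" using sg unfolding simple_graph_def by blast
  have "{u. KB_adj V E B u} \<subseteq> Pow V"
  proof
    fix u assume "u \<in> {u. KB_adj V E B u}"
    then have "is_biclique V E u" unfolding KB_adj_def bicliques_def by simp
    then have "u \<subseteq> V" unfolding is_biclique_def by (elim conjE)
    then show "u \<in> Pow V" by simp
  qed
  then have "finite {u. KB_adj V E B u}" using finV by (meson finite_Pow_iff finite_subset)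
  then obtain D1 D2 where Dcov: "{u. KB_adj V E B u} \<subseteq> {D1, D2}" using card_le2_cover[OF _ c2] by blast
  have Bb: "is_biclique V E B" using assms(5) unfolding bicliques_def by blast
  then have BV: "B \<subseteq> V" and Bcb: "CB E B" and Bmax: "\<forall>B'. B \<subseteq> B' \<and> B' \<subseteq> V \<and> CB E B' \<longrightarrow> B' = B"
    unfolding is_biclique_def by blast+
  from Bcb obtain X Y where XY: "X \<noteq> {}" "Y \<noteq> {}" "X \<inter> Y = {}" "X \<union> Y = B"
     "\<forall>x\<in>X. \<forall>x'\<in>X. \<not> E x x'" "\<forall>y\<in>Y. \<forall>y'\<in>Y. \<not> E y y'" "\<forall>x\<in>X. \<forall>y\<in>Y. E x y"
    unfolding induces_complete_bipartite_def by blast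
  have cov: "\<forall>S. S \<subseteq> V \<longrightarrow> CB E S \<longrightarrow> S \<inter> B \<noteq> {} \<longrightarrow> \<not> S \<subseteq> B \<longrightarrow>
                 (\<exists>D. (D = D1 \<or> D = D2) \<and> CB E D \<and> S \<subseteq> D)"
  proof (intro allI impI)
    fix S assume S: "S \<subseteq> V" "CB E S" "S \<inter> B \<noteq> {}" "\<not> S \<subseteq> B"
    obtain D where D: "is_biclique V E D" "S \<subseteq> D" using ext_biclique[OF finV S(1,2)] by blast
    have "D \<noteq> B" using D(2) S(4) by blast
    moreover have "D \<inter> B \<noteq> {}" using D(2) S(3) by blast
    ultimately have "KB_adj V E B D" unfolding KB_adj_def bicliques_def using Bb D(1) by blast
    then have "D = D1 \<or> D = D2" using Dcov by blast
    moreover have "CB E D" using D(1) unfolding is_biclique_def by blast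
    ultimately show "\<exists>D. (D = D1 \<or> D = D2) \<and> CB E D \<and> S \<subseteq> D" using D(2) by blast
  qed
  have tf: "false_twin_free V E" by fact
  have bs1: "bs V E B X Y D1 D2"
    unfolding bs_def
    by (intro conjI) (fact sg tf BV XY(1) XY(2) XY(3) XY(4) XY(5) XY(6) XY(7) Bmax cov)+
  have Esym: "E x y = E y x" for x y using sg unfolding simple_graph_def by blast
  have crossY: "\<forall>x\<in>Y. \<forall>y\<in>X. E x y" using XY(7) Esym by blast
  have XY3: "Y \<inter> X = {}" using XY(3) by blast
  have XY4: "Y \<union> X = B" using XY(4) by blast
  have bs2: "bs V E B Y X D1 D2"
    unfolding bs_def
    by (intro conjI) (fact sg tf BV XY(1) XY(2) XY3 XY4 XY(5) XY(6) crossY Bmax cov)+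
  have conn: "\<forall>x\<in>V. \<forall>y\<in>V. E\<^sup>*\<^sup>* x y" using assms(2) unfolding connected_graph_def by blast
  have c7: "7 \<le> card V" using assms(4) by simp
  from assms(6) show False
  proof
    assume "has_induced_claw E B"
    then obtain v a b c where cl: "v \<in> B" "a \<in> B" "b \<in> B" "c \<in> B" "E v a" "E v b" "E v c"
      "a \<noteq> b" "a \<noteq> c" "b \<noteq> c" unfolding has_induced_claw_def by blast
    have "v \<in> X \<or> v \<in> Y" using cl(1) XY(4) by blast
    then show False
    proof
      assume v: "v \<in> X"
      have "a \<notin> X" "b \<notin> X" "c \<notin> X" using XY(5) v cl(5,6,7) by blast+
      then have "a \<in> Y" "b \<in> Y" "c \<in> Y" using cl(2,3,4) XY(4) by blast+
      then have "claw V E B X Y D1 D2 v a b c"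
        unfolding claw_def claw_axioms_def using bs1 v cl(8,9,10) by blast
      then show False using claw.claw_false[OF _ conn c7] by blast
    next
      assume v: "v \<in> Y"
      have "a \<notin> Y" "b \<notin> Y" "c \<notin> Y" using XY(6) v cl(5,6,7) by blast+
      then have "a \<in> X" "b \<in> X" "c \<in> X" using cl(2,3,4) XY(4) by blast+
      then have "claw V E B Y X D1 D2 v a b c"
        unfolding claw_def claw_axioms_def using bs2 v cl(8,9,10) by blast
      then show False using claw.claw_false[OF _ conn c7] by blast
    qed
  next
    assume "induces_C4 E B"
    then obtain a b c d where C: "B = {a, b, c, d}" "distinct [a, b, c, d]"
      "E a b" "E b c" "E c d" "E d a" "\<not> E a c" "\<not> E b d" unfolding induces_C4_def by blast
    have ad: "E a d" using C(6) Esym[of a d] by simp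
    have inB: "a \<in> B" "b \<in> B" "c \<in> B" "d \<in> B" using C(1) by auto
    have "a \<in> X \<or> a \<in> Y" using inB XY(4) by blast
    then show False
    proof
      assume a: "a \<in> X"
      have "b \<notin> X" "d \<notin> X" using XY(5) a C(3) ad by blast+
      then have bd: "b \<in> Y" "d \<in> Y" using inB XY(4) by blast+
      have "c \<notin> Y" using XY(6) bd(1) C(4) by blast
      then have cX: "c \<in> X" using inB XY(4) by blast
      have "X \<subseteq> {a, c}" using XY(3) XY(4) C(1) bd by blast
      then have Xe: "X = {a, c}" using a cX by blast
      have "Y \<subseteq> {b, d}" using XY(3) XY(4) C(1) a cX by blast
      then have Ye: "Y = {b, d}" using bd by blast
      have ne: "a \<noteq> c" "b \<noteq> d" using C(2) by auto
      have L: "c4 V E B X Y D1 D2 a c b d"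
        unfolding c4_def c4_axioms_def by (intro conjI) (fact bs1 Xe Ye ne(1) ne(2))+
      show False by (rule c4.c4_false[OF L conn c7])
    next
      assume a: "a \<in> Y"
      have "b \<notin> Y" "d \<notin> Y" using XY(6) a C(3) ad by blast+
      then have bd: "b \<in> X" "d \<in> X" using inB XY(4) by blast+
      have "c \<notin> X" using XY(5) bd(1) C(4) by blast
      then have cX: "c \<in> Y" using inB XY(4) by blast
      have "Y \<subseteq> {a, c}"
      proof
        fix y assume y: "y \<in> Y"
        then have "y \<in> {a, b, c, d}" using XY(4) C(1) by blast
        moreover have "y \<noteq> b" "y \<noteq> d" using y bd XY(3) by blast+
        ultimately show "y \<in> {a, c}" by blast
      qed
      then have Ye: "Y = {a, c}" using a cX by blast
      have "X \<subseteq> {b, d}"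
      proof
        fix x assume x: "x \<in> X"
        then have "x \<in> {a, b, c, d}" using XY(4) C(1) by blast
        moreover have "x \<noteq> a" "x \<noteq> c" using x a cX XY(3) by blast+
        ultimately show "x \<in> {b, d}" by blast
      qed
      then have Xe: "X = {b, d}" using bd by blast
      have ne: "a \<noteq> c" "b \<noteq> d" using C(2) by auto
      have L: "c4 V E B Y X D1 D2 a c b d"
        unfolding c4_def c4_axioms_def by (intro conjI) (fact bs2 Xe Ye ne(1) ne(2))+
      show False by (rule c4.c4_false[OF L conn c7])
    qed
  qed
qed

end
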